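(* Let $K$ be a spherically complete valued field and $d\ge 1$. Then every nested family $\{C_i\}_{i\in I}$ of nonempty convex subsets of $K^d$ (i.e. for all $i,j$, $C_i\subseteq C_j$ or $C_j\subseteq C_i$) has nonempty intersection.
   Context: $K$ is a field with valuation $\nu:K\to\Gamma\cup\{\infty\}$, valuation ring $\mathcal{O}$. A ball in $K$ is a set $\{x:\nu(x-c)\ge r\}$ or $\{x:\nu(x-c)>r\}$ with $c\in K$, $r\in\Gamma$. $K$ is spherically complete if every nested family of balls in $K$ has nonempty intersection. A set $X\subseteq K^d$ is convex if it is closed under combinations $\sum_{i=1}^n\alpha_ix_i$ with $x_i\in X$, $\alpha_i\in\mathcal{O}$, $\sum\alpha_i=1$. *)

theory Defs
  imports "HOL-Analysis.Finite_Cartesian_Product"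
begin

text \<open>Values of a valuation: Some g for g in the ordered group Gamma, None for infinity.\<close>

fun vle :: "'g::linorder option \<Rightarrow> 'g option \<Rightarrow> bool" where
  "vle _ None = True"
| "vle None (Some _) = False"
| "vle (Some a) (Some b) = (a \<le> b)"

definition vlt :: "'g::linorder option \<Rightarrow> 'g option \<Rightarrow> bool" where
  "vlt a b \<longleftrightarrow> vle a b \<and> a \<noteq> b"

fun vplus :: "'g::plus option \<Rightarrow> 'g option \<Rightarrow> 'g option" where
  "vplus (Some a) (Some b) = Some (a + b)"
| "vplus _ _ = None"

definition valuation :: "('k::field \<Rightarrow> 'g::linordered_ab_group_add option) \<Rightarrow> bool" where
  "valuation \<nu> \<longleftrightarrow>
     (\<forall>x. \<nu> x = None \<longleftrightarrow> x = 0) \<and>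
     (\<forall>x y. \<nu> (x * y) = vplus (\<nu> x) (\<nu> y)) \<and>
     (\<forall>x y. vle (if vle (\<nu> x) (\<nu> y) then \<nu> x else \<nu> y) (\<nu> (x + y))) \<and>
     (\<forall>g. \<exists>x. \<nu> x = Some g)"

definition val_ring :: "('k::field \<Rightarrow> 'g::linordered_ab_group_add option) \<Rightarrow> 'k set" where
  "val_ring \<nu> = {x. vle (Some 0) (\<nu> x)}"

definition vball_closed :: "('k::field \<Rightarrow> 'g::linordered_ab_group_add option) \<Rightarrow> 'k \<Rightarrow> 'g \<Rightarrow> 'k set" where
  "vball_closed \<nu> c r = {x. vle (Some r) (\<nu> (x - c))}"

definition vball_open :: "('k::field \<Rightarrow> 'g::linordered_ab_group_add option) \<Rightarrow> 'k \<Rightarrow> 'g \<Rightarrow> 'k set" where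
  "vball_open \<nu> c r = {x. vlt (Some r) (\<nu> (x - c))}"

definition is_vball :: "('k::field \<Rightarrow> 'g::linordered_ab_group_add option) \<Rightarrow> 'k set \<Rightarrow> bool" where
  "is_vball \<nu> B \<longleftrightarrow> (\<exists>c r. B = vball_closed \<nu> c r \<or> B = vball_open \<nu> c r)"

definition spherically_complete :: "('k::field \<Rightarrow> 'g::linordered_ab_group_add option) \<Rightarrow> bool" where
  "spherically_complete \<nu> \<longleftrightarrow>
     (\<forall>\<B>. (\<forall>B\<in>\<B>. is_vball \<nu> B) \<longrightarrow> (\<forall>A\<in>\<B>. \<forall>B\<in>\<B>. A \<subseteq> B \<or> B \<subseteq> A) \<longrightarrow> \<Inter>\<B> \<noteq> {})"

text \<open>O-convex subsets of K^d (d = CARD('n)).\<close>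
definition vconvex :: "('k::field \<Rightarrow> 'g::linordered_ab_group_add option) \<Rightarrow> ('k ^ 'n) set \<Rightarrow> bool" where
  "vconvex \<nu> X \<longleftrightarrow>
     (\<forall>(n::nat) (\<alpha>::nat \<Rightarrow> 'k) (x::nat \<Rightarrow> 'k ^ 'n).
        (\<forall>i<n. x i \<in> X \<and> \<alpha> i \<in> val_ring \<nu>) \<and> (\<Sum>i<n. \<alpha> i) = 1 \<longrightarrow>
        (\<chi> j. \<Sum>i<n. \<alpha> i * x i $ j) \<in> X)"

end

theory Submission
  imports Defs
begin

lemma vle_Some_iff: "vle (Some r) w \<longleftrightarrow> (case w of None \<Rightarrow> True | Some a \<Rightarrow> r \<le> a)"
  by (cases w) auto

lemma vlt_Some_iff: "vlt (Some r) w \<longleftrightarrow> (case w of None \<Rightarrow> True | Some a \<Rightarrow> r < a)"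
  by (cases w) (auto simp: vlt_def)

lemma val_None: "valuation \<nu> \<Longrightarrow> \<nu> x = None \<longleftrightarrow> x = 0"
  by (simp add: valuation_def)

lemma val_mult: "valuation \<nu> \<Longrightarrow> \<nu> (x * y) = vplus (\<nu> x) (\<nu> y)"
  by (simp add: valuation_def)

lemma val_ultra: "valuation \<nu> \<Longrightarrow> vle (if vle (\<nu> x) (\<nu> y) then \<nu> x else \<nu> y) (\<nu> (x + y))"
  by (simp add: valuation_def)

lemma vle_trans: "vle a b \<Longrightarrow> vle b c \<Longrightarrow> vle (a::'g::linorder option) c"
  by (cases a; cases b; cases c) auto

lemma vlt_vle_trans: "vlt a b \<Longrightarrow> vle b c \<Longrightarrow> vlt (a::'g::linorder option) c"
  by (cases a; cases b; cases c) (auto simp: vlt_def)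

lemma val_one: assumes "valuation \<nu>" shows "\<nu> 1 = Some 0"
proof -
  obtain a where a: "\<nu> 1 = Some a" using val_None[OF assms, of 1] by (cases "\<nu> 1") auto
  have "\<nu> (1*1) = Some (a+a)" using val_mult[OF assms, of 1 1] a by simp
  then have "a + a = a" using a by simp
  then have "a = 0" by (metis add_cancel_right_right)
  then show ?thesis using a by simp
qed

lemma double0: "(b::'g::linordered_ab_group_add) + b = 0 \<Longrightarrow> b = 0"
proof (rule ccontr)
  assume h: "b + b = 0" "b \<noteq> 0"
  show False
  proof (cases "b < 0")
    case True then have "b + b < 0" using add_neg_neg by blast
    then show False using h by simp
  next
    case False then have "b > 0" using h by simp
    then have "b + b > 0" using add_pos_pos by blast
    then show False using h by simp
  qed
qed

lemma val_mone: assumes "valuation \<nu>" shows "\<nu> (-1) = Some 0"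
proof -
  obtain b where b: "\<nu> (-1) = Some b" using val_None[OF assms, of "-1"] by (cases "\<nu> (-1)") auto
  have "\<nu> ((-1)*(-1)) = Some (b+b)" using val_mult[OF assms, of "-1" "-1"] b by simp
  then have "b + b = 0" using val_one[OF assms] by simp
  then show ?thesis using b double0 by blast
qed

lemma val_neg: assumes "valuation \<nu>" shows "\<nu> (-x) = \<nu> x"
proof -
  have "\<nu> (-x) = \<nu> ((-1) * x)" by simp
  also have "\<dots> = vplus (Some 0) (\<nu> x)" using val_mult[OF assms, of "-1" x] val_mone[OF assms] by simp
  also have "\<dots> = \<nu> x" by (cases "\<nu> x") auto
  finally show ?thesis .
qed

lemma val_add_vle: assumes "valuation \<nu>" "vle s (\<nu> a)" "vle s (\<nu> b)" shows "vle s (\<nu> (a+b))"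
proof -
  have "vle s (if vle (\<nu> a) (\<nu> b) then \<nu> a else \<nu> b)" using assms by simp
  then show ?thesis using val_ultra[OF assms(1)] vle_trans by blast
qed

lemma val_add_vlt: assumes "valuation \<nu>" "vlt s (\<nu> a)" "vlt s (\<nu> b)" shows "vlt s (\<nu> (a+b))"
proof -
  have "vlt s (if vle (\<nu> a) (\<nu> b) then \<nu> a else \<nu> b)" using assms by simp
  then show ?thesis using val_ultra[OF assms(1)] vlt_vle_trans by blast
qed

lemma recenter_closed: assumes "valuation \<nu>" "z \<in> vball_closed \<nu> c r"
  shows "vball_closed \<nu> c r = vball_closed \<nu> z r"
proof -
  have zc: "vle (Some r) (\<nu> (z - c))" "vle (Some r) (\<nu> (c - z))"
    using assms(2) val_neg[OF assms(1), of "z - c"] by (auto simp: vball_closed_def)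
  show ?thesis
  proof (rule set_eqI, rule iffI)
    fix x assume "x \<in> vball_closed \<nu> c r"
    then have h: "vle (Some r) (\<nu> (x - c))" by (simp add: vball_closed_def)
    have "vle (Some r) (\<nu> ((x - c) + (c - z)))"
      by (rule val_add_vle[OF assms(1) h zc(2)])
    moreover have "(x - c) + (c - z) = x - z" by simp
    ultimately show "x \<in> vball_closed \<nu> z r" by (simp add: vball_closed_def)
  next
    fix x assume "x \<in> vball_closed \<nu> z r"
    then have h: "vle (Some r) (\<nu> (x - z))" by (simp add: vball_closed_def)
    have "vle (Some r) (\<nu> ((x - z) + (z - c)))"
      by (rule val_add_vle[OF assms(1) h zc(1)])
    moreover have "(x - z) + (z - c) = x - c" by simp
    ultimately show "x \<in> vball_closed \<nu> c r" by (simp add: vball_closed_def)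
  qed
qed

lemma recenter_open: assumes "valuation \<nu>" "z \<in> vball_open \<nu> c r"
  shows "vball_open \<nu> c r = vball_open \<nu> z r"
proof -
  have zc: "vlt (Some r) (\<nu> (z - c))" "vlt (Some r) (\<nu> (c - z))"
    using assms(2) val_neg[OF assms(1), of "z - c"] by (auto simp: vball_open_def)
  show ?thesis
  proof (rule set_eqI, rule iffI)
    fix x assume "x \<in> vball_open \<nu> c r"
    then have h: "vlt (Some r) (\<nu> (x - c))" by (simp add: vball_open_def)
    have "vlt (Some r) (\<nu> ((x - c) + (c - z)))"
      by (rule val_add_vlt[OF assms(1) h zc(2)])
    moreover have "(x - c) + (c - z) = x - z" by simp
    ultimately show "x \<in> vball_open \<nu> z r" by (simp add: vball_open_def)
  next
    fix x assume "x \<in> vball_open \<nu> z r"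
    then have h: "vlt (Some r) (\<nu> (x - z))" by (simp add: vball_open_def)
    have "vlt (Some r) (\<nu> ((x - z) + (z - c)))"
      by (rule val_add_vlt[OF assms(1) h zc(1)])
    moreover have "(x - z) + (z - c) = x - c" by simp
    ultimately show "x \<in> vball_open \<nu> c r" by (simp add: vball_open_def)
  qed
qed

lemma recenter: assumes "valuation \<nu>" "is_vball \<nu> A" "z \<in> A"
  shows "\<exists>r. A = vball_closed \<nu> z r \<or> A = vball_open \<nu> z r"
  using assms recenter_closed recenter_open unfolding is_vball_def by metis

lemma sub_cc: "r \<le> s \<Longrightarrow> vball_closed \<nu> z s \<subseteq> vball_closed \<nu> z r"
  by (auto simp: vball_closed_def vle_Some_iff split: option.splits)
lemma sub_oo: "r \<le> s \<Longrightarrow> vball_open \<nu> z s \<subseteq> vball_open \<nu> z r"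
  by (auto simp: vball_open_def vlt_Some_iff split: option.splits)
lemma sub_oc: "r \<le> s \<Longrightarrow> vball_open \<nu> z s \<subseteq> vball_closed \<nu> z r"
  by (auto simp: vball_open_def vball_closed_def vle_Some_iff vlt_Some_iff split: option.splits)
lemma sub_co: "r < s \<Longrightarrow> vball_closed \<nu> z s \<subseteq> vball_open \<nu> z r"
  by (auto simp: vball_open_def vball_closed_def vle_Some_iff vlt_Some_iff split: option.splits)
lemma sub_same: "vball_open \<nu> z r \<subseteq> vball_closed \<nu> z r"
  by (rule sub_oc) simp

lemma same_center_nested:
  assumes "A = vball_closed \<nu> z r1 \<or> A = vball_open \<nu> z r1"
    and "B = vball_closed \<nu> z r2 \<or> B = vball_open \<nu> z r2"
  shows "A \<subseteq> B \<or> B \<subseteq> A"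
proof -
  consider "r1 < r2" | "r1 = r2" | "r2 < r1" by fastforce
  then show ?thesis
  proof cases
    case 1 then show ?thesis using assms sub_cc[of r1 r2] sub_oo[of r1 r2] sub_oc[of r1 r2] sub_co[of r1 r2]
      by (metis order_less_imp_le)
  next
    case 2 then show ?thesis using assms sub_same by blast
  next
    case 3 then show ?thesis using assms sub_cc[of r2 r1] sub_oo[of r2 r1] sub_oc[of r2 r1] sub_co[of r2 r1]
      by (metis order_less_imp_le)
  qed
qed

lemma balls_nested: assumes "valuation \<nu>" "is_vball \<nu> A" "is_vball \<nu> B" "A \<inter> B \<noteq> {}"
  shows "A \<subseteq> B \<or> B \<subseteq> A"
proof -
  obtain z where "z \<in> A" "z \<in> B" using assms(4) by blast
  then show ?thesis using recenter[OF assms(1,2)] recenter[OF assms(1,3)] same_center_nested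
    by metis
qed

lemma one_dim:
  fixes \<nu> :: "'k::field \<Rightarrow> 'g::linordered_ab_group_add option" and E :: "'i \<Rightarrow> 'k set"
  assumes val: "valuation \<nu>" and sc: "spherically_complete \<nu>"
    and ne: "\<forall>i\<in>I. E i \<noteq> {}"
    and cv: "\<forall>i\<in>I. \<forall>u\<in>E i. \<forall>v\<in>E i. \<forall>\<alpha>\<in>val_ring \<nu>. u + \<alpha> * (v - u) \<in> E i"
    and nest: "\<forall>i\<in>I. \<forall>j\<in>I. E i \<subseteq> E j \<or> E j \<subseteq> E i"
  shows "\<exists>p. \<forall>i\<in>I. p \<in> E i"
proof -
  define \<B> where "\<B> = {B. is_vball \<nu> B \<and> (\<exists>i\<in>I. E i \<subseteq> B)}"
  have "\<forall>A\<in>\<B>. \<forall>B\<in>\<B>. A \<subseteq> B \<or> B \<subseteq> A"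
  proof (intro ballI)
    fix A B assume A: "A \<in> \<B>" and B: "B \<in> \<B>"
    then obtain i j where ij: "i \<in> I" "j \<in> I" "E i \<subseteq> A" "E j \<subseteq> B" by (auto simp: \<B>_def)
    have "A \<inter> B \<noteq> {}"
    proof (cases "E i \<subseteq> E j")
      case True
      obtain e where "e \<in> E i" using ne ij(1) by blast
      then have "e \<in> A \<inter> B" using True ij by blast
      then show ?thesis by blast
    next
      case False
      then have "E j \<subseteq> E i" using nest ij(1,2) by blast
      obtain e where "e \<in> E j" using ne ij(2) by blast
      then have "e \<in> A \<inter> B" using \<open>E j \<subseteq> E i\<close> ij by blast
      then show ?thesis by blast
    qed
    then show "A \<subseteq> B \<or> B \<subseteq> A" using balls_nested[OF val] A B by (auto simp: \<B>_def)
  qed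
  moreover have "\<forall>B\<in>\<B>. is_vball \<nu> B" by (simp add: \<B>_def)
  ultimately have "\<Inter>\<B> \<noteq> {}" using sc unfolding spherically_complete_def by simp
  then obtain p where p: "p \<in> \<Inter>\<B>" by blast
  have "p \<in> E i" if i: "i \<in> I" for i
  proof (rule ccontr)
    assume pn: "p \<notin> E i"
    obtain u where u: "u \<in> E i" using ne i by blast
    have "p - u \<noteq> 0" using pn u by auto
    then obtain r where r: "\<nu> (p - u) = Some r" using val_None[OF val] by (cases "\<nu> (p - u)") auto
    have sub: "E i \<subseteq> vball_open \<nu> u r"
    proof
      fix v assume v: "v \<in> E i"
      show "v \<in> vball_open \<nu> u r"
      proof (rule ccontr)
        assume "v \<notin> vball_open \<nu> u r"
        then obtain s where s: "\<nu> (v - u) = Some s" "s \<le> r"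
          by (cases "\<nu> (v - u)") (auto simp: vball_open_def vlt_Some_iff)
        have "\<nu> (v - u) \<noteq> None" using s by simp
        then have vu: "v - u \<noteq> 0" using val_None[OF val, of "v - u"] by simp
        define \<alpha> where "\<alpha> = (p - u) / (v - u)"
        have pe: "p - u = \<alpha> * (v - u)" using vu by (simp add: \<alpha>_def)
        have "Some r = vplus (\<nu> \<alpha>) (Some s)" using val_mult[OF val, of \<alpha> "v - u"] pe r s by simp
        then obtain t where t: "\<nu> \<alpha> = Some t" "t + s = r" by (cases "\<nu> \<alpha>") auto
        then have "t = r - s" by (simp add: eq_diff_eq)
        then have "t \<ge> 0" using s by simp
        then have "\<alpha> \<in> val_ring \<nu>" using t by (simp add: val_ring_def)
        then have "u + \<alpha> * (v - u) \<in> E i" using cv i u v by blast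
        moreover have "u + \<alpha> * (v - u) = p" by (simp add: pe[symmetric])
        ultimately show False using pn by simp
      qed
    qed
    then have "vball_open \<nu> u r \<in> \<B>" using i unfolding \<B>_def is_vball_def by blast
    then have "p \<in> vball_open \<nu> u r" using p by blast
    then show False using r by (simp add: vball_open_def vlt_def)
  qed
  then show ?thesis by blast
qed


lemma fiber_step:
  fixes \<nu> :: "'k::field \<Rightarrow> 'g::linordered_ab_group_add option"
    and C :: "'i \<Rightarrow> ('k ^ 'n) set" and I :: "'i set"
  assumes val: "valuation \<nu>"
    and sc: "spherically_complete \<nu>"
    and cv: "\<forall>i\<in>I. C i \<noteq> {} \<and> vconvex \<nu> (C i)"
    and nest: "\<forall>i\<in>I. \<forall>j\<in>I. C i \<subseteq> C j \<or> C j \<subseteq> C i"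
  shows "finite J \<Longrightarrow> \<exists>a. \<forall>i\<in>I. \<exists>x\<in>C i. \<forall>j\<in>J. x $ j = a $ j"
proof (induction J rule: finite_induct)
  case empty
  then show ?case using cv by auto
next
  case (insert j J)
  then obtain a where a: "\<forall>i\<in>I. \<exists>x\<in>C i. \<forall>j\<in>J. x $ j = a $ j" by blast
  define E where "E i = {x $ j | x. x \<in> C i \<and> (\<forall>j'\<in>J. x $ j' = a $ j')}" for i
  have ne: "\<forall>i\<in>I. E i \<noteq> {}" using a by (auto simp: E_def)
  have nE: "\<forall>i\<in>I. \<forall>i'\<in>I. E i \<subseteq> E i' \<or> E i' \<subseteq> E i"
  proof (intro ballI)
    fix i i' assume "i \<in> I" "i' \<in> I"
    then have "C i \<subseteq> C i' \<or> C i' \<subseteq> C i" using nest by blast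
    then show "E i \<subseteq> E i' \<or> E i' \<subseteq> E i" unfolding E_def by blast
  qed
  have one_in: "1 \<in> val_ring \<nu>" using val_one[OF val] by (simp add: val_ring_def)
  have cE: "\<forall>i\<in>I. \<forall>u\<in>E i. \<forall>v\<in>E i. \<forall>\<alpha>\<in>val_ring \<nu>. u + \<alpha> * (v - u) \<in> E i"
  proof (intro ballI)
    fix i u v \<alpha> assume i: "i \<in> I" and u: "u \<in> E i" and v: "v \<in> E i" and al: "\<alpha> \<in> val_ring \<nu>"
    obtain x where x: "x \<in> C i" "\<forall>j'\<in>J. x $ j' = a $ j'" "u = x $ j" using u by (auto simp: E_def)
    obtain y where y: "y \<in> C i" "\<forall>j'\<in>J. y $ j' = a $ j'" "v = y $ j" using v by (auto simp: E_def)
    have na: "vle (Some 0) (\<nu> (- \<alpha>))" using al val_neg[OF val, of \<alpha>] by (simp add: val_ring_def)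
    have "vle (Some 0) (\<nu> (1 + - \<alpha>))" by (rule val_add_vle[OF val _ na]) (simp add: val_one[OF val])
    then have a1: "1 - \<alpha> \<in> val_ring \<nu>" by (simp add: val_ring_def)
    define \<beta> :: "nat \<Rightarrow> 'k" where "\<beta> k = (if k = 0 then 1 - \<alpha> else \<alpha>)" for k
    define w :: "nat \<Rightarrow> 'k ^ 'n" where "w k = (if k = 0 then x else y)" for k
    have "vconvex \<nu> (C i)" using cv i by blast
    moreover have "\<forall>k<2. w k \<in> C i \<and> \<beta> k \<in> val_ring \<nu>"
      using x y al a1 unfolding w_def \<beta>_def by (simp add: less_2_cases_iff)
    moreover have "(\<Sum>k<2. \<beta> k) = 1" by (simp add: \<beta>_def numeral_2_eq_2)
    ultimately have z: "(\<chi> jj. \<Sum>k<2. \<beta> k * w k $ jj) \<in> C i"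
      unfolding vconvex_def by blast
    define z where "z = (\<chi> jj. \<Sum>k<2. \<beta> k * w k $ jj)"
    have zc: "z $ jj = (1 - \<alpha>) * x $ jj + \<alpha> * y $ jj" for jj
      by (simp add: z_def \<beta>_def w_def numeral_2_eq_2)
    have "\<forall>j'\<in>J. z $ j' = a $ j'" using x y by (simp add: zc algebra_simps)
    moreover have "z $ j = u + \<alpha> * (v - u)" using x y by (simp add: zc algebra_simps)
    ultimately have "z \<in> C i \<and> (\<forall>j'\<in>J. z $ j' = a $ j') \<and> z $ j = u + \<alpha> * (v - u)"
      using z unfolding z_def by blast
    then show "u + \<alpha> * (v - u) \<in> E i" unfolding E_def by (intro CollectI exI[of _ z]) auto
  qed
  obtain p where p: "\<forall>i\<in>I. p \<in> E i" using one_dim[OF val sc ne cE nE] by blast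
  define a' where "a' = (\<chi> k. if k = j then p else a $ k)"
  have "\<forall>i\<in>I. \<exists>x\<in>C i. \<forall>j'\<in>insert j J. x $ j' = a' $ j'"
  proof
    fix i assume "i \<in> I"
    then obtain x where "x \<in> C i" "\<forall>j'\<in>J. x $ j' = a $ j'" "p = x $ j" using p by (auto simp: E_def)
    then show "\<exists>x\<in>C i. \<forall>j'\<in>insert j J. x $ j' = a' $ j'" by (auto simp: a'_def)
  qed
  then show ?case by blast
qed

theorem lemma3p4:
  fixes \<nu> :: "'k::field \<Rightarrow> 'g::linordered_ab_group_add option"
    and C :: "'i \<Rightarrow> ('k ^ 'n) set" and I :: "'i set"
  assumes "valuation \<nu>"
    and "spherically_complete \<nu>"
    and "\<forall>i\<in>I. C i \<noteq> {} \<and> vconvex \<nu> (C i)"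
    and "\<forall>i\<in>I. \<forall>j\<in>I. C i \<subseteq> C j \<or> C j \<subseteq> C i"
  shows "(\<Inter>i\<in>I. C i) \<noteq> {}"
proof -
  have fa: "\<exists>a. \<forall>i\<in>I. \<exists>x\<in>C i. \<forall>j\<in>UNIV. x $ j = a $ j"
    by (rule fiber_step[OF assms]) simp
  then obtain a where a: "\<forall>i\<in>I. \<exists>x\<in>C i. \<forall>j\<in>UNIV. x $ j = a $ j" by (elim exE)
  have "a \<in> C i" if i: "i \<in> I" for i
  proof -
    have "\<exists>x\<in>C i. \<forall>j\<in>UNIV. x $ j = a $ j" using a i by (rule bspec)
    then obtain x where x: "x \<in> C i" "\<forall>j\<in>UNIV. x $ j = a $ j" by (rule bexE)
    then have "x = a" by (simp add: vec_eq_iff)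
    then show ?thesis using x(1) by simp
  qed
  then have "a \<in> (\<Inter>i\<in>I. C i)" by (rule INT_I)
  then show ?thesis by (metis empty_iff)
qed

end
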